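(* Assume Hypothesis (H). Let $b=b_1+b_2$ where $b_1,b_2:\mathbb R^n\times\mathbb R^n\to\mathbb R^n$ are bilinear with $b_i(x,y)\geq 0$ for all $x,y\geq 0$, and let $M=N-P$ where $N$ is an M-matrix and $P\geq 0$. Let $x_0$ satisfy $0\leq x_0\leq x_\ast$ and $F(x_0)\leq 0$ (e.g. $x_0=0$), and consider the iteration $$\big(N-b_1(\cdot,x_k)\big)x_{k+1}=a+Px_k+b_2(x_k,x_k),\quad k\geq 0.$$ Then: (1) $N-b_1(\cdot,x_k)$ is nonsingular for all $k$, so the iteration is well defined; (2) $x_k\leq x_{k+1}\leq x_\ast$ for all $k$, and $x_k\to x_\ast$ as $k\to\infty$; (3) $F(x_k)\leq 0$ for all $k$.
   Context: Inequalities between vectors/matrices are componentwise. A Z-matrix is a real square matrix with nonpositive off-diagonal entries; an M-matrix is a matrix $sI-P$ with $P\geq0$ entrywise and $s\geq\rho(P)$ ($\rho$ = spectral radius). Let $M\in\mathbb R^{n\times n}$ be a nonsingular M-matrix, $a\in\mathbb R^n$ with $a\geq 0$, and $b:\mathbb R^n\times\mathbb R^n\to\mathbb R^n$ a bilinear map (not necessarily symmetric) with $b(x,y)\geq 0$ whenever $x,y\geq 0$. A solution of $Mx=a+b(x,x)$ means a vector $x\geq 0$ satisfying it; a solution $x_\ast$ is minimal if $x_\ast\leq y$ for every solution $y$. $F(x):=Mx-a-b(x,x)$. For a bilinear map $c$ and $x\in\mathbb R^n$, $c(x,\cdot)$ and $c(\cdot,x)$ denote the $n\times n$ matrices of $y\mapsto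 c(x,y)$ and $y\mapsto c(y,x)$; $F'_x:=M-b(x,\cdot)-b(\cdot,x)$. Hypothesis (H): the equation has a minimal solution $x_\ast$, $x_\ast>0$ (all components strictly positive), and either $F'_{x_\ast}$ is nonsingular, or $F'_{x_\ast}$ is irreducible and $F'_x\neq F'_{x_\ast}$ for every $x$ with $0\leq x\leq x_\ast$, $x\neq x_\ast$. *)

theory Defs
  imports "HOL-Analysis.Analysis"
begin

definition complexify :: "real^'n^'m \<Rightarrow> complex^'n^'m" where
  "complexify A = (\<chi> i j. complex_of_real (A $ i $ j))"

definition spec_rad :: "real^'n^'n \<Rightarrow> real" where
  "spec_rad A = Sup {cmod c | c. \<exists>v::complex^'n. v \<noteq> 0 \<and> complexify A *v v = c *s v}"

definition M_matrix :: "real^'n^'n \<Rightarrow> bool" where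
  "M_matrix A \<longleftrightarrow> (\<exists>s (P::real^'n^'n). 0 \<le> P \<and> spec_rad P \<le> s \<and> A = s *\<^sub>R mat 1 - P)"

text \<open>Irreducible: no partition of the index set into nonempty I, J with A_ij = 0
for i in I, j in J (equivalently, not permutation-similar to block triangular form).\<close>
definition irreducible_mat :: "real^'n^'n \<Rightarrow> bool" where
  "irreducible_mat A \<longleftrightarrow>
     \<not> (\<exists>I. I \<noteq> {} \<and> I \<noteq> UNIV \<and> (\<forall>i\<in>I. \<forall>j\<in>-I. A $ i $ j = 0))"

definition is_solution ::
  "real^'n^'n \<Rightarrow> real^'n \<Rightarrow> (real^'n \<Rightarrow> real^'n \<Rightarrow> real^'n) \<Rightarrow> real^'n \<Rightarrow> bool" where
  "is_solution M a b x \<longleftrightarrow> 0 \<le> x \<and> M *v x = a + b x x"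

definition is_minimal_solution ::
  "real^'n^'n \<Rightarrow> real^'n \<Rightarrow> (real^'n \<Rightarrow> real^'n \<Rightarrow> real^'n) \<Rightarrow> real^'n \<Rightarrow> bool" where
  "is_minimal_solution M a b x \<longleftrightarrow>
     is_solution M a b x \<and> (\<forall>y. is_solution M a b y \<longrightarrow> x \<le> y)"

definition Fmap ::
  "real^'n^'n \<Rightarrow> real^'n \<Rightarrow> (real^'n \<Rightarrow> real^'n \<Rightarrow> real^'n) \<Rightarrow> real^'n \<Rightarrow> real^'n" where
  "Fmap M a b x = M *v x - a - b x x"

definition Fderiv ::
  "real^'n^'n \<Rightarrow> (real^'n \<Rightarrow> real^'n \<Rightarrow> real^'n) \<Rightarrow> real^'n \<Rightarrow> real^'n^'n" where
  "Fderiv M b x = M - matrix (b x) - matrix (\<lambda>y. b y x)"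

definition hypH ::
  "real^'n^'n \<Rightarrow> real^'n \<Rightarrow> (real^'n \<Rightarrow> real^'n \<Rightarrow> real^'n) \<Rightarrow> real^'n \<Rightarrow> bool" where
  "hypH M a b xs \<longleftrightarrow>
     is_minimal_solution M a b xs \<and> (\<forall>i. 0 < xs $ i) \<and>
     (invertible (Fderiv M b xs) \<or>
      (irreducible_mat (Fderiv M b xs) \<and>
       (\<forall>x. 0 \<le> x \<and> x \<le> xs \<and> x \<noteq> xs \<longrightarrow> Fderiv M b x \<noteq> Fderiv M b xs)))"

primrec iter_seq ::
  "real^'n^'n \<Rightarrow> real^'n^'n \<Rightarrow> real^'n \<Rightarrow> (real^'n \<Rightarrow> real^'n \<Rightarrow> real^'n)
   \<Rightarrow> (real^'n \<Rightarrow> real^'n \<Rightarrow> real^'n) \<Rightarrow> real^'n \<Rightarrow> nat \<Rightarrow> real^'n" where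
  "iter_seq N P a b1 b2 x0 0 = x0"
| "iter_seq N P a b1 b2 x0 (Suc k) =
     (let xk = iter_seq N P a b1 b2 x0 k in
      matrix_inv (N - matrix (\<lambda>y. b1 y xk)) *v (a + P *v xk + b2 xk xk))"

end

theory Submission
  imports Defs
begin


lemma vle: "(x::real^'n) \<le> y \<longleftrightarrow> (\<forall>i. x$i \<le> y$i)"
  by (simp add: less_eq_vec_def)

lemma mle: "(P::real^'n^'m) \<le> Q \<longleftrightarrow> (\<forall>i j. P$i$j \<le> Q$i$j)"
  by (simp add: less_eq_vec_def)

lemma bil_mono:
  fixes h :: "real^'n \<Rightarrow> real^'n \<Rightarrow> real^'n"
  assumes "bilinear h" "\<And>x y. 0 \<le> x \<Longrightarrow> 0 \<le> y \<Longrightarrow> 0 \<le> h x y"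
    and "0 \<le> u" "u \<le> u'" "0 \<le> v" "v \<le> v'"
  shows "h u v \<le> h u' v'"
proof -
  have d1: "0 \<le> u' - u" "0 \<le> v' - v" "0 \<le> v'" using assms(3-6) by (auto simp: vle intro: order_trans)
  have "h u' v' = h (u' - u) v' + h u (v' - v) + h u v"
    using assms(1) by (simp add: bilinear_lsub bilinear_rsub)
  moreover have "0 \<le> h (u' - u) v'" "0 \<le> h u (v' - v)" using assms(2) d1 assms(3) by auto
  ultimately show ?thesis by (auto simp: vle)
qed

lemma mat_mono:
  fixes P :: "real^'n^'n"
  assumes "0 \<le> P" "u \<le> v"
  shows "P *v u \<le> P *v v"
  using assms unfolding vle matrix_vector_mult_def
  by (auto intro!: sum_mono mult_left_mono simp: vle mle)

lemma mat_nonneg: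
  fixes P :: "real^'n^'n"
  assumes "0 \<le> P" "0 \<le> u"
  shows "0 \<le> P *v u"
  using mat_mono[OF assms] by simp

lemma Mmat_Z:
  fixes N :: "real^'n^'n"
  assumes "M_matrix N" "i \<noteq> j"
  shows "N$i$j \<le> 0"
  using assms unfolding M_matrix_def by (auto simp: mat_def mle)

lemma Amul:
  fixes N :: "real^'n^'n"
  assumes "bilinear b1"
  shows "(N - matrix (\<lambda>y. b1 y x)) *v v = N *v v - b1 v x"
proof -
  have "linear (\<lambda>y. b1 y x)" using assms by (simp add: bilinear_def)
  then show ?thesis by (simp add: matrix_vector_mult_diff_rdistrib matrix_works linear_matrix_vector_mul_eq)
qed

lemma minv:
  fixes A :: "real^'n^'n"
  assumes "invertible A"
  shows "A *v (matrix_inv A *v c) = c"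
proof -
  have "A ** matrix_inv A = mat 1"
    using assms unfolding invertible_def matrix_inv_def by (rule someI2_ex) auto
  then show ?thesis by (simp add: matrix_vector_mul_assoc)
qed

lemma inj_invertible:
  fixes A :: "real^'n^'n"
  assumes "\<And>v. A *v v = 0 \<Longrightarrow> v = 0"
  shows "invertible A"
  using assms by (simp add: invertible_left_inverse matrix_left_invertible_ker)



lemma minratio:
  fixes x v :: "real^'n"
  assumes "\<forall>i. 0 < v$i" "\<not> (0 \<le> x)"
  obtains t z i where "t < 0" "z = x - t *\<^sub>R v" "0 \<le> z" "z$i = 0"
proof -
  define t where "t = Min (range (\<lambda>i. x$i / v$i))"
  have fin: "finite (range (\<lambda>i. x$i / v$i))" by simp
  have "t \<in> range (\<lambda>i. x$i / v$i)" using Min_in[OF fin] unfolding t_def by blast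
  then obtain i where ti: "t = x$i / v$i" by blast
  have tle: "\<And>k. t \<le> x$k / v$k" unfolding t_def using fin by auto
  obtain j where "x$j < 0" using assms(2) by (auto simp: vle not_le)
  then have "x$j / v$j < 0" using assms(1) by (simp add: divide_neg_pos)
  then have t0: "t < 0" using tle[of j] by linarith
  have "0 \<le> x - t *\<^sub>R v"
    unfolding vle
  proof
    fix k
    have "t * v$k \<le> x$k" using tle[of k] assms(1) by (simp add: pos_le_divide_eq)
    then show "(0::real^'n)$k \<le> (x - t *\<^sub>R v)$k" by simp
  qed
  moreover have "(x - t *\<^sub>R v)$i = 0" using ti assms(1)[rule_format, of i] by simp
  ultimately show ?thesis using that t0 by blast
qed

lemma Zrow:
  fixes N :: "real^'n^'n" and z :: "real^'n"
  assumes "\<forall>i j. i \<noteq> j \<longrightarrow> N$i$j \<le> 0" "0 \<le> z" "z$i = 0"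
  shows "(N *v z)$i \<le> 0" "(N *v z)$i = 0 \<Longrightarrow> z$j \<noteq> 0 \<Longrightarrow> N$i$j = 0"
proof -
  have t: "\<And>j. N$i$j * z$j \<le> 0"
  proof -
    fix j show "N$i$j * z$j \<le> 0"
      using assms by (cases "j = i") (auto simp: vle mult_nonpos_nonneg)
  qed
  show "(N *v z)$i \<le> 0" unfolding matrix_vector_mult_def using t by (simp add: sum_nonpos)
  assume "(N *v z)$i = 0" "z$j \<noteq> 0"
  then have "(\<Sum>j\<in>UNIV. - (N$i$j * z$j)) = 0" unfolding matrix_vector_mult_def
    by (simp add: sum_negf)
  then have "\<forall>j\<in>UNIV. - (N$i$j * z$j) = 0"
    by (subst sum_nonneg_eq_0_iff[symmetric]) (use t in auto)
  then show "N$i$j = 0" using \<open>z$j \<noteq> 0\<close> by auto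
qed

lemma core:
  fixes A :: "real^'n^'n" and x v :: "real^'n"
  assumes Z: "\<forall>i j. i \<noteq> j \<longrightarrow> A$i$j \<le> 0" and v: "\<forall>i. 0 < v$i" "0 \<le> A *v v"
    and x: "0 \<le> A *v x" "\<forall>i. 0 < (A *v x)$i \<or> 0 < (A *v v)$i"
  shows "0 \<le> x"
proof (rule ccontr)
  assume "\<not> 0 \<le> x"
  then obtain t z i where t: "t < 0" "z = x - t *\<^sub>R v" "0 \<le> z" "z$i = 0"
    using minratio v(1) by metis
  have "(A *v z)$i = (A *v x)$i - t * (A *v v)$i"
    using t(2) by (simp add: matrix_vector_mult_diff_distrib matrix_vector_mult_scaleR)
  moreover have "0 \<le> (A *v x)$i" "0 \<le> (A *v v)$i" using x v by (auto simp: vle)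
  moreover have "0 < (A *v x)$i \<or> 0 < (A *v v)$i" using x by auto
  ultimately have "0 < (A *v z)$i" using t(1)
    by (smt (verit, best) mult_neg_pos mult_nonpos_nonneg)
  moreover have "(A *v z)$i \<le> 0" using Zrow(1)[OF Z t(3,4)] .
  ultimately show False by simp
qed

lemma invpos:
  fixes A :: "real^'n^'n" and x v :: "real^'n"
  assumes Z: "\<forall>i j. i \<noteq> j \<longrightarrow> A$i$j \<le> 0" and inv: "invertible A"
    and v: "\<forall>i. 0 < v$i" "0 \<le> A *v v" and x: "0 \<le> A *v x"
  shows "0 \<le> x"
proof -
  define g where "g = matrix_inv A *v 1"
  have Ag: "A *v g = 1" unfolding g_def using minv[OF inv] .
  have g0: "0 \<le> g" by (rule core[OF Z v]) (auto simp: Ag vle)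
  have v': "\<forall>i. 0 < (v + g)$i" using v(1) g0 by (auto simp: vle add_pos_nonneg)
  have Av': "A *v (v + g) = A *v v + 1" by (simp add: matrix_vector_right_distrib Ag)
  have "\<forall>i. 0 < (A *v (v + g))$i" using v(2) by (auto simp: Av' vle add_nonneg_pos)
  then show ?thesis
    by (intro core[OF Z v' _ x]) (auto simp: vle less_imp_le)
qed



lemma mono_conv:
  fixes s :: "nat \<Rightarrow> real^'n"
  assumes inc: "\<And>k. s k \<le> s (Suc k)" and bd: "\<And>k. s k \<le> y"
  shows "\<exists>z. s \<longlonglongrightarrow> z \<and> z \<le> y \<and> (\<forall>k. s k \<le> z)"
proof -
  define z where "z = (\<chi> i. SUP k. s k $ i)"
  have incs: "\<And>i. incseq (\<lambda>k. s k $ i)"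
    using inc by (intro incseq_SucI) (auto simp: vle)
  have bdd: "\<And>i. bdd_above (range (\<lambda>k. s k $ i))"
    using bd by (auto simp: vle bdd_above_def)
  have "\<And>i. (\<lambda>k. s k $ i) \<longlonglongrightarrow> z $ i"
    unfolding z_def using LIMSEQ_incseq_SUP[OF bdd incs] by simp
  then have "s \<longlonglongrightarrow> z" by (rule vec_tendstoI)
  moreover have "z \<le> y" unfolding vle z_def using bd by (auto simp: vle intro!: cSUP_least)
  moreover have "\<forall>k. s k \<le> z" unfolding vle z_def using bdd by (auto intro!: cSUP_upper)
  ultimately show ?thesis by blast
qed

lemma Mcomp: "M = N - P \<Longrightarrow> (M *v u)$i = (N *v u)$i - ((P::real^'n^'n) *v u)$i"
  by (simp add: matrix_vector_mult_diff_rdistrib)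

lemma stepG:
  fixes N P M :: "real^'n^'n" and a y xk :: "real^'n"
    and b1 b2 :: "real^'n \<Rightarrow> real^'n \<Rightarrow> real^'n"
  assumes b1: "bilinear b1" "\<And>x y. 0 \<le> x \<Longrightarrow> 0 \<le> y \<Longrightarrow> 0 \<le> b1 x y"
    and b2: "bilinear b2" "\<And>x y. 0 \<le> x \<Longrightarrow> 0 \<le> y \<Longrightarrow> 0 \<le> b2 x y"
    and P: "0 \<le> P" and MNP: "M = N - P"
    and y: "a + b1 y y + b2 y y \<le> M *v y"
    and xk: "0 \<le> xk" "xk \<le> y" "M *v xk \<le> a + b1 xk xk + b2 xk xk"
    and inv: "invertible (N - matrix (\<lambda>u. b1 u xk))"
    and ip: "\<forall>v. 0 \<le> (N - matrix (\<lambda>u. b1 u xk)) *v v \<longrightarrow> 0 \<le> v"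
    and x': "x' = matrix_inv (N - matrix (\<lambda>u. b1 u xk)) *v (a + P *v xk + b2 xk xk)"
  shows "(N - matrix (\<lambda>u. b1 u xk)) *v x' = a + P *v xk + b2 xk xk"
    "xk \<le> x'" "x' \<le> y" "M *v x' \<le> a + b1 x' x' + b2 x' x'"
proof -
  let ?A = "N - matrix (\<lambda>u. b1 u xk)"
  show eq: "?A *v x' = a + P *v xk + b2 xk xk" using x' minv[OF inv] by simp
  then have eqi: "\<And>i. (N *v x')$i - (b1 x' xk)$i = a$i + (P *v xk)$i + (b2 xk xk)$i"
    by (simp add: Amul[OF b1(1)] vec_eq_iff)
  have "0 \<le> ?A *v (x' - xk)"
    unfolding vle
  proof
    fix i
    have "(?A *v (x' - xk))$i = (?A *v x')$i - (N *v xk)$i + (b1 xk xk)$i"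
      by (simp add: matrix_vector_mult_diff_distrib Amul[OF b1(1)])
    also have "\<dots> = a$i + (b1 xk xk)$i + (b2 xk xk)$i - (M *v xk)$i"
      using eq Mcomp[OF MNP, of xk i] by simp
    finally show "(0::real^'n)$i \<le> (?A *v (x' - xk))$i" using xk(3) by (simp add: vle)
  qed
  then have "0 \<le> x' - xk" using ip by blast
  then show xx: "xk \<le> x'" by (simp add: vle)
  have y0: "0 \<le> y" using xk by (auto simp: vle intro: order_trans)
  have m1: "b1 y xk \<le> b1 y y" by (rule bil_mono[OF b1 y0 order_refl xk(1,2)])
  have m2: "b2 xk xk \<le> b2 y y" by (rule bil_mono[OF b2 xk(1,2) xk(1,2)])
  have m3: "P *v xk \<le> P *v y" by (rule mat_mono[OF P xk(2)])
  have "0 \<le> ?A *v (y - x')"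
    unfolding vle
  proof
    fix i
    have "(?A *v (y - x'))$i = (M *v y)$i + (P *v y)$i - (b1 y xk)$i - (a$i + (P *v xk)$i + (b2 xk xk)$i)"
      using eq Mcomp[OF MNP, of y i]
      by (simp add: matrix_vector_mult_diff_distrib Amul[OF b1(1)])
    then show "(0::real^'n)$i \<le> (?A *v (y - x'))$i"
      using y m1 m2 m3 by (simp add: vle) (smt (verit))
  qed
  then have "0 \<le> y - x'" using ip by blast
  then show "x' \<le> y" by (simp add: vle)
  have x'0: "0 \<le> x'" using xk(1) xx by (auto simp: vle intro: order_trans)
  have n1: "b1 x' xk \<le> b1 x' x'" by (rule bil_mono[OF b1 x'0 order_refl xk(1) xx])
  have n2: "b2 xk xk \<le> b2 x' x'" by (rule bil_mono[OF b2 xk(1) xx xk(1) xx])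
  have n3: "P *v xk \<le> P *v x'" by (rule mat_mono[OF P xx])
  show "M *v x' \<le> a + b1 x' x' + b2 x' x'"
    unfolding vle
  proof
    fix i
    have "(M *v x')$i = a$i + (P *v xk)$i + (b2 xk xk)$i + (b1 x' xk)$i - (P *v x')$i"
      using eqi[of i] Mcomp[OF MNP, of x' i] by simp
    then show "(M *v x')$i \<le> (a + b1 x' x' + b2 x' x')$i"
      using n1 n2 n3 by (simp add: vle) (smt (verit))
  qed
qed

lemma iterG:
  fixes N P M :: "real^'n^'n" and a y x0 :: "real^'n"
    and b1 b2 :: "real^'n \<Rightarrow> real^'n \<Rightarrow> real^'n"
  assumes b1: "bilinear b1" "\<And>x y. 0 \<le> x \<Longrightarrow> 0 \<le> y \<Longrightarrow> 0 \<le> b1 x y"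
    and b2: "bilinear b2" "\<And>x y. 0 \<le> x \<Longrightarrow> 0 \<le> y \<Longrightarrow> 0 \<le> b2 x y"
    and P: "0 \<le> P" and MNP: "M = N - P"
    and y: "a + b1 y y + b2 y y \<le> M *v y"
    and x0: "0 \<le> x0" "x0 \<le> y" "M *v x0 \<le> a + b1 x0 x0 + b2 x0 x0"
    and IP: "\<And>x. 0 \<le> x \<Longrightarrow> x \<le> y \<Longrightarrow> invertible (N - matrix (\<lambda>u. b1 u x)) \<and>
               (\<forall>v. 0 \<le> (N - matrix (\<lambda>u. b1 u x)) *v v \<longrightarrow> 0 \<le> v)"
  defines "X \<equiv> iter_seq N P a b1 b2 x0"
  shows "\<forall>k. invertible (N - matrix (\<lambda>u. b1 u (X k))) \<and>
             (N - matrix (\<lambda>u. b1 u (X k))) *v X (Suc k) = a + P *v X k + b2 (X k) (X k) \<and>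
             0 \<le> X k \<and> X k \<le> X (Suc k) \<and> X (Suc k) \<le> y \<and>
             M *v X k \<le> a + b1 (X k) (X k) + b2 (X k) (X k)"
    "\<exists>z. X \<longlonglongrightarrow> z \<and> 0 \<le> z \<and> z \<le> y \<and> M *v z = a + b1 z z + b2 z z"
proof -
  have XS: "\<And>k. X (Suc k) = matrix_inv (N - matrix (\<lambda>u. b1 u (X k))) *v (a + P *v X k + b2 (X k) (X k))"
    unfolding X_def by (simp add: Let_def)
  have Q: "0 \<le> X k \<and> X k \<le> y \<and> M *v X k \<le> a + b1 (X k) (X k) + b2 (X k) (X k)" for k
  proof (induction k)
    case 0 then show ?case using x0 by (simp add: X_def)
  next
    case (Suc k)
    note st = stepG[OF b1 b2 P MNP y _ _ _ _ _ XS[of k]]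
    have ip: "invertible (N - matrix (\<lambda>u. b1 u (X k)))"
      "\<forall>v. 0 \<le> (N - matrix (\<lambda>u. b1 u (X k))) *v v \<longrightarrow> 0 \<le> v" using IP Suc by auto
    have "X k \<le> X (Suc k)" using st(2) Suc ip by blast
    then have "0 \<le> X (Suc k)" using Suc by (auto simp: vle intro: order_trans)
    then show ?case using st(3,4) Suc ip by blast
  qed
  show all: "\<forall>k. invertible (N - matrix (\<lambda>u. b1 u (X k))) \<and>
             (N - matrix (\<lambda>u. b1 u (X k))) *v X (Suc k) = a + P *v X k + b2 (X k) (X k) \<and>
             0 \<le> X k \<and> X k \<le> X (Suc k) \<and> X (Suc k) \<le> y \<and>
             M *v X k \<le> a + b1 (X k) (X k) + b2 (X k) (X k)"
  proof
    fix k
    note st = stepG[OF b1 b2 P MNP y _ _ _ _ _ XS[of k]]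
    have ip: "invertible (N - matrix (\<lambda>u. b1 u (X k)))"
      "\<forall>v. 0 \<le> (N - matrix (\<lambda>u. b1 u (X k))) *v v \<longrightarrow> 0 \<le> v" using IP Q by auto
    show "invertible (N - matrix (\<lambda>u. b1 u (X k))) \<and>
             (N - matrix (\<lambda>u. b1 u (X k))) *v X (Suc k) = a + P *v X k + b2 (X k) (X k) \<and>
             0 \<le> X k \<and> X k \<le> X (Suc k) \<and> X (Suc k) \<le> y \<and>
             M *v X k \<le> a + b1 (X k) (X k) + b2 (X k) (X k)"
      using st Q[of k] ip by blast
  qed
  obtain z where z: "X \<longlonglongrightarrow> z" "z \<le> y" "\<forall>k. X k \<le> z"
  proof -
    have "\<exists>z. X \<longlonglongrightarrow> z \<and> z \<le> y \<and> (\<forall>k. X k \<le> z)"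
      by (rule mono_conv) (use all Q in auto)
    then show ?thesis using that by blast
  qed
  have z0: "0 \<le> z" using Q[of 0] z(3) by (auto simp: vle intro: order_trans)
  have bb1: "bounded_bilinear b1" "bounded_bilinear b2"
    using b1(1) b2(1) bilinear_conv_bounded_bilinear by auto
  have zS: "(\<lambda>k. X (Suc k)) \<longlonglongrightarrow> z" using LIMSEQ_Suc[OF z(1)] .
  have t1: "(\<lambda>k. N *v X (Suc k)) \<longlonglongrightarrow> N *v z"
    by (rule bounded_linear.tendsto[OF matrix_vector_mul_bounded_linear zS])
  have t2: "(\<lambda>k. b1 (X (Suc k)) (X k)) \<longlonglongrightarrow> b1 z z"
    by (rule bounded_bilinear.tendsto[OF bb1(1) zS z(1)])
  have t3: "(\<lambda>k. P *v X k) \<longlonglongrightarrow> P *v z"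
    by (rule bounded_linear.tendsto[OF matrix_vector_mul_bounded_linear z(1)])
  have t4: "(\<lambda>k. b2 (X k) (X k)) \<longlonglongrightarrow> b2 z z"
    by (rule bounded_bilinear.tendsto[OF bb1(2) z(1) z(1)])
  have L1: "(\<lambda>k. N *v X (Suc k) - b1 (X (Suc k)) (X k)) \<longlonglongrightarrow> N *v z - b1 z z"
    by (rule tendsto_diff[OF t1 t2])
  have L2: "(\<lambda>k. a + P *v X k + b2 (X k) (X k)) \<longlonglongrightarrow> a + P *v z + b2 z z"
    by (rule tendsto_add[OF tendsto_add[OF tendsto_const t3] t4])
  have "(\<lambda>k. N *v X (Suc k) - b1 (X (Suc k)) (X k)) = (\<lambda>k. a + P *v X k + b2 (X k) (X k))"
  proof
    fix k show "N *v X (Suc k) - b1 (X (Suc k)) (X k) = a + P *v X k + b2 (X k) (X k)"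
      using all[rule_format, of k] by (simp add: Amul[OF b1(1)])
  qed
  then have "N *v z - b1 z z = a + P *v z + b2 z z" using LIMSEQ_unique[OF L1, of "a + P *v z + b2 z z"] L2 by simp
  then have E: "\<And>i. (N *v z - b1 z z)$i = (a + P *v z + b2 z z)$i" by simp
  have "M *v z = a + b1 z z + b2 z z"
    unfolding vec_eq_iff
  proof
    fix i show "(M *v z) $ i = (a + b1 z z + b2 z z) $ i"
      using E[of i] Mcomp[OF MNP, of z i] by simp
  qed
  then show "\<exists>z. X \<longlonglongrightarrow> z \<and> 0 \<le> z \<and> z \<le> y \<and> M *v z = a + b1 z z + b2 z z"
    using z z0 by blast
qed



lemma Fle: "Fmap M a b x \<le> 0 \<longleftrightarrow> M *v x \<le> a + b x x"
  unfolding Fmap_def vle by (simp add: diff_le_eq add.commute)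

lemma bilinear_add2:
  assumes "bilinear f" "bilinear g"
  shows "bilinear (\<lambda>x y. f x y + g x y)"
  using assms unfolding bilinear_def by (auto intro: linear_compose_add)

lemma matrix_zero: "matrix (\<lambda>u::real^'n. (0::real^'m)) = 0"
  by (simp add: matrix_def vec_eq_iff)

lemma superS:
  fixes M :: "real^'n^'n" and a xs y :: "real^'n" and b :: "real^'n \<Rightarrow> real^'n \<Rightarrow> real^'n"
  assumes MZ: "\<forall>i j. i \<noteq> j \<longrightarrow> M$i$j \<le> 0" and Minv: "invertible M"
    and b: "bilinear b" "\<And>x y. 0 \<le> x \<Longrightarrow> 0 \<le> y \<Longrightarrow> 0 \<le> b x y"
    and a: "0 \<le> a" and xs: "is_minimal_solution M a b xs" "\<forall>i. 0 < xs$i"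
    and y: "0 \<le> y" "a + b y y \<le> M *v y"
  shows "xs \<le> y"
proof -
  have b0: "bilinear (\<lambda>x y. 0::real^'n)" "\<And>x y::real^'n. 0 \<le> x \<Longrightarrow> 0 \<le> y \<Longrightarrow> (0::real^'n) \<le> 0"
    by (auto simp: bilinear_def linear_zero)
  have Mxs: "M *v xs = a + b xs xs" "0 \<le> xs"
    using xs(1) by (auto simp: is_minimal_solution_def is_solution_def)
  have "0 \<le> a + b xs xs" using a b(2)[OF Mxs(2) Mxs(2)] by (auto simp: vle add_nonneg_nonneg)
  then have Mv: "0 \<le> M *v xs" using Mxs by simp
  have IP: "invertible (M - matrix (\<lambda>u. (\<lambda>x y. 0::real^'n) u x)) \<and>
            (\<forall>v. 0 \<le> (M - matrix (\<lambda>u. (\<lambda>x y. 0::real^'n) u x)) *v v \<longrightarrow> 0 \<le> v)" for x :: "real^'n"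
    using invpos[OF MZ Minv xs(2) Mv] Minv by (simp add: matrix_zero)
  have "\<exists>z. iter_seq M 0 a (\<lambda>x y. 0) b 0 \<longlonglongrightarrow> z \<and> 0 \<le> z \<and> z \<le> y \<and> M *v z = a + 0 + b z z"
    by (rule iterG(2)[OF b0 b order_refl _ _ order_refl y(1)]) (use y a IP bilinear_lzero[OF b(1)] in auto)
  then obtain z where z: "0 \<le> z" "z \<le> y" "M *v z = a + b z z" by auto
  then have "xs \<le> z" using xs(1) by (auto simp: is_minimal_solution_def is_solution_def)
  then show ?thesis using z(2) by (rule order_trans)
qed

lemma coreC:
  fixes M N P :: "real^'n^'n" and a xs x :: "real^'n" and b1 b2 :: "real^'n \<Rightarrow> real^'n \<Rightarrow> real^'n"
  assumes NZ: "\<forall>i j. i \<noteq> j \<longrightarrow> N$i$j \<le> 0" and P: "0 \<le> P" and MNP: "M = N - P"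
    and MZ: "\<forall>i j. i \<noteq> j \<longrightarrow> M$i$j \<le> 0" and Minv: "invertible M"
    and b1: "bilinear b1" "\<And>x y. 0 \<le> x \<Longrightarrow> 0 \<le> y \<Longrightarrow> 0 \<le> b1 x y"
    and b2: "bilinear b2" "\<And>x y. 0 \<le> x \<Longrightarrow> 0 \<le> y \<Longrightarrow> 0 \<le> b2 x y"
    and a: "0 \<le> a"
    and xs: "is_minimal_solution M a (\<lambda>x y. b1 x y + b2 x y) xs" "\<forall>i. 0 < xs$i"
    and x: "0 \<le> x" "x \<le> xs"
    and Av: "0 \<le> (N - matrix (\<lambda>u. b1 u x)) *v v"
  shows "0 \<le> v"
proof (rule ccontr)
  let ?A = "N - matrix (\<lambda>u. b1 u x)"
  assume "\<not> 0 \<le> v"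
  then obtain t z i0 where t: "t < 0" "z = v - t *\<^sub>R xs" "0 \<le> z" "z$i0 = 0"
    using minratio xs(2) by metis
  have xs0: "0 \<le> xs" using xs(2) by (auto simp: vle less_imp_le)
  have Mxs: "M *v xs = a + b1 xs xs + b2 xs xs"
    using xs(1) by (auto simp: is_minimal_solution_def is_solution_def)
  have Mxsi: "\<And>i. (M *v xs)$i = a$i + (b1 xs xs)$i + (b2 xs xs)$i" using Mxs by simp
  have mb1: "b1 xs x \<le> b1 xs xs" by (rule bil_mono[OF b1 xs0 order_refl x])
  have Pxs0: "0 \<le> P *v xs" by (rule mat_nonneg[OF P xs0])
  have b2xs0: "0 \<le> b2 xs xs" using b2(2)[OF xs0 xs0] .
  have Axs: "(?A *v xs)$i = a$i + (P *v xs)$i + (b2 xs xs)$i + ((b1 xs xs)$i - (b1 xs x)$i)" for i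
    using Mxsi[of i] Mcomp[OF MNP, of xs i] by (simp add: Amul[OF b1(1)])
  have Axs0: "\<And>i. 0 \<le> (?A *v xs)$i"
    using Axs a Pxs0 b2xs0 mb1 by (simp add: vle)
  have Zfacts: "a$i = 0 \<and> (P *v xs)$i = 0 \<and> (b2 xs xs)$i = 0 \<and> (b1 xs xs)$i = (b1 xs x)$i
     \<and> (b1 z x)$i = 0 \<and> (\<forall>j. z$j \<noteq> 0 \<longrightarrow> N$i$j = 0)" if zi: "z$i = 0" for i
  proof -
    have e: "(?A *v z)$i = (?A *v v)$i - t * (?A *v xs)$i"
      using t(2) by (simp add: matrix_vector_mult_diff_distrib matrix_vector_mult_scaleR)
    have Az: "(?A *v z)$i = (N *v z)$i - (b1 z x)$i" by (simp add: Amul[OF b1(1)])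
    have Nz: "(N *v z)$i \<le> 0" using Zrow(1)[OF NZ t(3) zi] .
    have bz: "0 \<le> (b1 z x)$i" using b1(2)[OF t(3) x(1)] by (simp add: vle)
    have Avi: "0 \<le> (?A *v v)$i" using Av by (simp add: vle)
    have p: "0 \<le> - t * (?A *v xs)$i" using t(1) Axs0[of i] by (simp add: mult_nonpos_nonneg)
    have "(?A *v xs)$i = 0"
    proof (rule ccontr)
      assume "(?A *v xs)$i \<noteq> 0"
      then have "0 < (?A *v xs)$i" using Axs0[of i] by simp
      then have "0 < - t * (?A *v xs)$i" using t(1) by (simp add: mult_neg_pos)
      then show False using e Az Nz bz Avi by linarith
    qed
    then have A0: "a$i + (P *v xs)$i + (b2 xs xs)$i + ((b1 xs xs)$i - (b1 xs x)$i) = 0" using Axs by simp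
    have nn: "0 \<le> a$i" "0 \<le> (P *v xs)$i" "0 \<le> (b2 xs xs)$i" "(b1 xs x)$i \<le> (b1 xs xs)$i"
      using a Pxs0 b2xs0 mb1 by (auto simp: vle)
    have "(N *v z)$i = 0" "(b1 z x)$i = 0" using e Az Nz bz Avi p \<open>(?A *v xs)$i = 0\<close> by linarith+
    moreover have "\<forall>j. z$j \<noteq> 0 \<longrightarrow> N$i$j = 0" using Zrow(2)[OF NZ t(3) zi] calculation(1) by blast
    moreover have "a$i = 0" "(P *v xs)$i = 0" "(b2 xs xs)$i = 0" "(b1 xs xs)$i = (b1 xs x)$i"
      using A0 nn by linarith+
    ultimately show ?thesis by blast
  qed
  define y where "y = (\<chi> j. if z$j = 0 then xs$j / 2 else xs$j)"
  define r where "r = (\<chi> j. if z$j = 0 then 0 else xs$j)"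
  define c where "c = (\<Sum>j\<in>UNIV. if z$j = 0 then 0 else xs$j / z$j)"
  have y0: "0 \<le> y" and yxs: "y \<le> xs" using xs(2) by (auto simp: vle y_def less_imp_le)
  have r0: "0 \<le> r" and rxs: "r \<le> xs" using xs(2) by (auto simp: vle r_def less_imp_le)
  have yr: "y = (1/2) *\<^sub>R xs + (1/2) *\<^sub>R r" by (simp add: vec_eq_iff y_def r_def)
  have rcz: "r \<le> c *\<^sub>R z"
    unfolding vle
  proof
    fix j
    show "r$j \<le> (c *\<^sub>R z)$j"
    proof (cases "z$j = 0")
      case True then show ?thesis by (simp add: r_def)
    next
      case False
      then have zj: "0 < z$j" using t(3) by (auto simp: vle less_le)
      have "xs$j / z$j \<le> c" unfolding c_def
        using member_le_sum[of j UNIV "\<lambda>j. if z$j = 0 then 0 else xs$j / z$j"] False xs(2) t(3)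
        by (force simp: vle intro: divide_nonneg_nonneg less_imp_le)
      then have "xs$j \<le> c * z$j" using zj by (simp add: divide_le_eq)
      then show ?thesis using False by (simp add: r_def)
    qed
  qed
  have c0: "0 \<le> c" unfolding c_def
    by (rule sum_nonneg) (use xs(2) t(3) in \<open>auto simp: vle intro: divide_nonneg_nonneg less_imp_le\<close>)
  have super: "a + (\<lambda>x y. b1 x y + b2 x y) y y \<le> M *v y"
    unfolding vle
  proof
    fix i
    show "(a + (\<lambda>x y. b1 x y + b2 x y) y y)$i \<le> (M *v y)$i"
    proof (cases "z$i = 0")
      case True
      note Zf = Zfacts[OF True]
      have "0 \<le> (P *v y)$i" "(P *v y)$i \<le> (P *v xs)$i"
        using mat_nonneg[OF P y0] mat_mono[OF P yxs] by (simp_all add: vle)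
      then have Py: "(P *v y)$i = 0" using Zf by linarith
      have "(N *v y)$i = (\<Sum>j\<in>UNIV. (1/2) * (N$i$j * xs$j))"
        unfolding matrix_vector_mult_def using Zf by (auto intro!: sum.cong simp: y_def)
      also have "\<dots> = (1/2) * (N *v xs)$i"
        by (simp add: matrix_vector_mult_def sum_distrib_left)
      also have "(N *v xs)$i = (b1 xs xs)$i"
        using Mcomp[OF MNP, of xs i] Mxsi[of i] Zf by simp
      finally have My: "(M *v y)$i = (1/2) * (b1 xs xs)$i"
        using Mcomp[OF MNP, of y i] Py by simp
      have "(b2 y y)$i \<le> (b2 xs xs)$i" using bil_mono[OF b2 y0 yxs y0 yxs] by (simp add: vle)
      then have b2y: "(b2 y y)$i \<le> 0" using Zf by simp
      have "b1 y y = b1 ((1/2) *\<^sub>R xs + (1/2) *\<^sub>R r) y"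
        by (rule arg_cong[where f="\<lambda>u. b1 u y"], rule yr)
      also have "\<dots> = (1/2) *\<^sub>R b1 xs y + (1/2) *\<^sub>R b1 r y"
        by (simp add: bilinear_ladd[OF b1(1)] bilinear_lmul[OF b1(1)])
      finally have byy: "b1 y y = (1/2) *\<^sub>R b1 xs y + (1/2) *\<^sub>R b1 r y" .
      have "b1 xs y \<le> b1 xs xs" by (rule bil_mono[OF b1 xs0 order_refl y0 yxs])
      then have q1: "(b1 xs y)$i \<le> (b1 xs xs)$i" by (simp add: vle)
      have "b1 r y \<le> b1 r xs" by (rule bil_mono[OF b1 r0 order_refl y0 yxs])
      moreover have "b1 r xs = b1 r x + b1 r (xs - x)" by (simp add: bilinear_rsub[OF b1(1)])
      moreover have "b1 r (xs - x) \<le> b1 xs (xs - x)"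
        using x(2) by (intro bil_mono[OF b1 r0 rxs]) (auto simp: vle)
      moreover have "(b1 xs (xs - x))$i = 0" using Zf by (simp add: bilinear_rsub[OF b1(1)])
      moreover have "b1 r x \<le> b1 (c *\<^sub>R z) x" by (rule bil_mono[OF b1 r0 rcz x(1) order_refl])
      moreover have "(b1 (c *\<^sub>R z) x)$i = 0" using Zf by (simp add: bilinear_lmul[OF b1(1)])
      ultimately have q2: "(b1 r y)$i \<le> 0" by (simp add: vle) (smt (verit))
      have "(b1 y y)$i = (1/2) * (b1 xs y)$i + (1/2) * (b1 r y)$i" using byy by simp
      then show ?thesis using My b2y q1 q2 Zf by simp
    next
      case False
      have "(M *v y)$i - (M *v xs)$i = (\<Sum>j\<in>UNIV. M$i$j * (y$j - xs$j))"
        by (simp add: matrix_vector_mult_def sum_subtractf right_diff_distrib)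
      also have "\<dots> \<ge> 0"
      proof (rule sum_nonneg)
        fix j
        show "0 \<le> M$i$j * (y$j - xs$j)"
        proof (cases "z$j = 0")
          case True
          then have "i \<noteq> j" using False by auto
          then have "M$i$j \<le> 0" using MZ by auto
          moreover have "y$j - xs$j \<le> 0" using True xs(2) by (simp add: y_def less_imp_le)
          ultimately show ?thesis by (simp add: mult_nonpos_nonpos)
        qed (simp add: y_def)
      qed
      finally have "(M *v xs)$i \<le> (M *v y)$i" by simp
      moreover have "b1 y y \<le> b1 xs xs" by (rule bil_mono[OF b1 y0 yxs y0 yxs])
      moreover have "b2 y y \<le> b2 xs xs" by (rule bil_mono[OF b2 y0 yxs y0 yxs])
      ultimately show ?thesis using Mxsi[of i] by (simp add: vle) (smt (verit))
    qed
  qed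
  have "xs \<le> y"
    by (rule superS[OF MZ Minv bilinear_add2[OF b1(1) b2(1)] _ a xs y0 super])
       (use b1(2) b2(2) in \<open>auto simp: vle add_nonneg_nonneg\<close>)
  then have "xs$i0 \<le> y$i0" by (simp add: vle)
  then have "xs$i0 \<le> xs$i0 / 2" by (simp add: y_def t(4))
  then show False using xs(2)[rule_format, of i0] by linarith
qed

theorem mainTheorem9:
  fixes M N P :: "real^'n^'n" and a x0 xs :: "real^'n"
    and b b1 b2 :: "real^'n \<Rightarrow> real^'n \<Rightarrow> real^'n"
  assumes M_nonsing: "M_matrix M" "invertible M"
    and a_nonneg: "0 \<le> a"
    and b1_bil: "bilinear b1" and b1_nonneg: "\<And>x y. 0 \<le> x \<Longrightarrow> 0 \<le> y \<Longrightarrow> 0 \<le> b1 x y"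
    and b2_bil: "bilinear b2" and b2_nonneg: "\<And>x y. 0 \<le> x \<Longrightarrow> 0 \<le> y \<Longrightarrow> 0 \<le> b2 x y"
    and b_def: "b = (\<lambda>x y. b1 x y + b2 x y)"
    and H: "hypH M a b xs"
    and N_M: "M_matrix N" and P_nonneg: "0 \<le> P" and splitting: "M = N - P"
    and x0_bounds: "0 \<le> x0" "x0 \<le> xs" and F_x0: "Fmap M a b x0 \<le> 0"
  shows "(\<forall>k. invertible (N - matrix (\<lambda>y. b1 y (iter_seq N P a b1 b2 x0 k))) \<and>
              (N - matrix (\<lambda>y. b1 y (iter_seq N P a b1 b2 x0 k))) *v iter_seq N P a b1 b2 x0 (Suc k)
                = a + P *v iter_seq N P a b1 b2 x0 k
                  + b2 (iter_seq N P a b1 b2 x0 k) (iter_seq N P a b1 b2 x0 k))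
       \<and> (\<forall>k. iter_seq N P a b1 b2 x0 k \<le> iter_seq N P a b1 b2 x0 (Suc k)
              \<and> iter_seq N P a b1 b2 x0 (Suc k) \<le> xs)
       \<and> (iter_seq N P a b1 b2 x0 \<longlonglongrightarrow> xs)
       \<and> (\<forall>k. Fmap M a b (iter_seq N P a b1 b2 x0 k) \<le> 0)"
proof -
  have NZ: "\<forall>i j. i \<noteq> j \<longrightarrow> N$i$j \<le> 0" using Mmat_Z[OF N_M] by blast
  have MZ: "\<forall>i j. i \<noteq> j \<longrightarrow> M$i$j \<le> 0" using Mmat_Z[OF M_nonsing(1)] by blast
  have xsm: "is_minimal_solution M a (\<lambda>x y. b1 x y + b2 x y) xs" "\<forall>i. 0 < xs$i"
    using H b_def by (auto simp: hypH_def)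
  have IP: "invertible (N - matrix (\<lambda>u. b1 u x)) \<and>
     (\<forall>v. 0 \<le> (N - matrix (\<lambda>u. b1 u x)) *v v \<longrightarrow> 0 \<le> v)" if "0 \<le> x" "x \<le> xs" for x
  proof -
    have ip: "\<forall>v. 0 \<le> (N - matrix (\<lambda>u. b1 u x)) *v v \<longrightarrow> 0 \<le> v"
    proof (intro allI impI)
      fix v assume Av: "0 \<le> (N - matrix (\<lambda>u. b1 u x)) *v v"
      show "0 \<le> v"
        by (rule coreC[OF NZ P_nonneg splitting MZ M_nonsing(2) b1_bil _ b2_bil _ a_nonneg xsm that Av])
           (auto intro: b1_nonneg b2_nonneg)
    qed
    have "invertible (N - matrix (\<lambda>u. b1 u x))"
    proof (rule inj_invertible)
      fix v assume v: "(N - matrix (\<lambda>u. b1 u x)) *v v = 0"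
      then have "0 \<le> v" using ip by simp
      moreover have eqm: "(N - matrix (\<lambda>u. b1 u x)) *v (- v) = 0"
        using v by (simp add: matrix_vector_mult_diff_distrib[of _ 0 v, simplified])
      have "0 \<le> - v" by (rule ip[rule_format]) (simp add: eqm)
      ultimately have h: "\<And>i. 0 \<le> v$i \<and> 0 \<le> (- v)$i" unfolding vle by simp
      show "v = 0" unfolding vec_eq_iff
      proof
        fix i show "v$i = (0::real^'n)$i" using h[of i] by simp
      qed
    qed
    then show ?thesis using ip by blast
  qed
  have Mxs: "M *v xs = a + b1 xs xs + b2 xs xs"
    using xsm(1) by (auto simp: is_minimal_solution_def is_solution_def)
  have Fx0: "M *v x0 \<le> a + b1 x0 x0 + b2 x0 x0"
    using F_x0 unfolding Fle b_def by (simp add: add.assoc)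
  have all: "\<forall>k. invertible (N - matrix (\<lambda>u. b1 u (iter_seq N P a b1 b2 x0 k))) \<and>
             (N - matrix (\<lambda>u. b1 u (iter_seq N P a b1 b2 x0 k))) *v iter_seq N P a b1 b2 x0 (Suc k) =
               a + P *v iter_seq N P a b1 b2 x0 k + b2 (iter_seq N P a b1 b2 x0 k) (iter_seq N P a b1 b2 x0 k) \<and>
             0 \<le> iter_seq N P a b1 b2 x0 k \<and> iter_seq N P a b1 b2 x0 k \<le> iter_seq N P a b1 b2 x0 (Suc k) \<and>
             iter_seq N P a b1 b2 x0 (Suc k) \<le> xs \<and>
             M *v iter_seq N P a b1 b2 x0 k \<le> a + b1 (iter_seq N P a b1 b2 x0 k) (iter_seq N P a b1 b2 x0 k)
                + b2 (iter_seq N P a b1 b2 x0 k) (iter_seq N P a b1 b2 x0 k)"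
    by (rule iterG(1)[OF b1_bil _ b2_bil _ P_nonneg splitting _ x0_bounds Fx0 IP])
       (auto intro: b1_nonneg b2_nonneg simp: Mxs)
  obtain z where z: "iter_seq N P a b1 b2 x0 \<longlonglongrightarrow> z" "0 \<le> z" "z \<le> xs" "M *v z = a + b1 z z + b2 z z"
  proof -
    have "\<exists>z. iter_seq N P a b1 b2 x0 \<longlonglongrightarrow> z \<and> 0 \<le> z \<and> z \<le> xs \<and> M *v z = a + b1 z z + b2 z z"
      by (rule iterG(2)[OF b1_bil _ b2_bil _ P_nonneg splitting _ x0_bounds Fx0 IP])
         (auto intro: b1_nonneg b2_nonneg simp: Mxs)
    then show ?thesis using that by blast
  qed
  have "xs \<le> z" using xsm(1) z(2,4) by (auto simp: is_minimal_solution_def is_solution_def)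
  then have "z = xs" using z(3) by (rule order_antisym[rotated])
  then have lim: "iter_seq N P a b1 b2 x0 \<longlonglongrightarrow> xs" using z(1) by simp
  have F: "\<forall>k. Fmap M a b (iter_seq N P a b1 b2 x0 k) \<le> 0"
    using all unfolding Fle b_def by (simp add: add.assoc)
  show ?thesis using all lim F by blast
qed


end
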